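(* Let $p\in(0,1]$ and let $\bar Q=(\bar q_{j,k})_{j,k\geq1}$ be the generator on $\mathbb N=\{1,2,\dots\}$ with $\bar q_{j,k}=\binom{j-1}{k-1}p^k(1-p)^{j-k}$ for $1\leq k\leq j-1$, $\bar q_{j,j+1}=(j+1)p$, $\bar q_{j,j}=p^j-(2+j)p$, and $\bar q_{j,k}=0$ otherwise. Let $q>0$ satisfy $-1+q+p^q\geq0$. Then the stationary distribution of $\bar Q$, if it exists, does not have a finite $q$th moment. *)

theory Defs
  imports "HOL-Analysis.Analysis"
begin

text \<open>The generator Qbar on the state space {1,2,...}; entries with j = 0 or k = 0 are
  set to 0 and never used.\<close>
definition Qbar :: "real \<Rightarrow> nat \<Rightarrow> nat \<Rightarrow> real" where
  "Qbar p j k =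
     (if j = 0 \<or> k = 0 then 0
      else if k \<le> j - 1 then real ((j - 1) choose (k - 1)) * p ^ k * (1 - p) ^ (j - k)
      else if k = j + 1 then real (j + 1) * p
      else if k = j then p ^ j - (2 + real j) * p
      else 0)"

definition stationary_dist :: "(nat \<Rightarrow> nat \<Rightarrow> real) \<Rightarrow> (nat \<Rightarrow> real) \<Rightarrow> bool" where
  "stationary_dist Q \<pi> \<longleftrightarrow>
     (\<forall>k\<ge>1. \<pi> k \<ge> 0) \<and> (\<pi> has_sum 1) {1..} \<and>
     (\<forall>k\<ge>1. ((\<lambda>j. \<pi> j * Q j k) has_sum 0) {1..})"

end

theory Submission
  imports Defs
begin

definition wt :: "real \<Rightarrow> nat \<Rightarrow> nat \<Rightarrow> real" where
  "wt p j k = real ((j - 1) choose (k - 1)) * p ^ k * (1 - p) ^ (j - k)"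

lemma Qbar_above: "k > j + 1 \<Longrightarrow> Qbar p j k = 0"
  by (simp add: Qbar_def)

lemma Qbar_sum:
  assumes "j \<ge> 1"
  shows "(\<Sum>k\<in>{1..j+1}. Qbar p j k * g k) =
     (\<Sum>k\<in>{1..j}. wt p j k * g k) - (2 + real j) * p * g j + real (j+1) * p * g (j+1)"
proof -
  have e1: "{1..j+1} = insert (j+1) (insert j {1..<j})" using assms by auto
  have e2: "{1..j} = insert j {1..<j}" using assms by auto
  have S: "(\<Sum>k\<in>{1..<j}. Qbar p j k * g k) = (\<Sum>k\<in>{1..<j}. wt p j k * g k)"
    by (rule sum.cong) (auto simp: Qbar_def wt_def)
  have A: "Qbar p j j = p ^ j - (2 + real j) * p" using assms by (simp add: Qbar_def)
  have B: "Qbar p j (j+1) = real (j+1) * p" using assms unfolding Qbar_def by auto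
  have C: "wt p j j = p ^ j" by (simp add: wt_def)
  have "(\<Sum>k\<in>{1..j+1}. Qbar p j k * g k) = (\<Sum>k\<in>{1..<j}. Qbar p j k * g k) + Qbar p j j * g j + Qbar p j (j+1) * g (j+1)"
    unfolding e1 by simp
  moreover have "(\<Sum>k\<in>{1..j}. wt p j k * g k) = (\<Sum>k\<in>{1..<j}. wt p j k * g k) + wt p j j * g j"
    unfolding e2 by simp
  ultimately show ?thesis unfolding S A B C by (simp add: algebra_simps)
qed

lemma wt_sum:
  assumes "j \<ge> 1"
  shows "(\<Sum>k\<in>{1..j}. wt p j k) = p"
proof -
  obtain m where m: "j = Suc m" using assms by (cases j) auto
  have "(\<Sum>k\<in>{1..j}. wt p j k) = (\<Sum>i\<in>{0..m}. wt p j (Suc i))"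
    unfolding m using sum.shift_bounds_cl_Suc_ivl[of "wt p (Suc m)" 0 m] by simp
  also have "\<dots> = p * (\<Sum>i\<le>m. real (m choose i) * p ^ i * (1 - p) ^ (m - i))"
    unfolding sum_distrib_left atLeast0AtMost by (rule sum.cong) (auto simp: wt_def m)
  also have "\<dots> = p * (p + (1 - p)) ^ m" by (simp only: binomial_ring[of p "1-p" m])
  finally show ?thesis by simp
qed

lemma wt_nonneg: "0 \<le> p \<Longrightarrow> p \<le> 1 \<Longrightarrow> 0 \<le> wt p j k"
  by (simp add: wt_def)

lemma wt_harm:
  assumes "j \<ge> 1" "0 \<le> p" "p \<le> 1"
  shows "(\<Sum>k\<in>{1..j}. wt p j k / real k) \<le> 1 / real j"
proof -
  have "(\<Sum>k\<in>{1..j}. wt p j k / real k) = (\<Sum>k\<in>{1..j}. real (j choose k) * p ^ k * (1 - p) ^ (j - k) / real j)"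
  proof (rule sum.cong)
    fix k assume k: "k \<in> {1..j}"
    then obtain k' where k': "k = Suc k'" by (cases k) auto
    have "real (Suc k') * real (j choose Suc k') = real j * real ((j - 1) choose k')"
      using binomial_absorption[of k' j] by (metis of_nat_mult)
    then have "real ((j - 1) choose (k - 1)) / real k = real (j choose k) / real j"
      using k k' assms by (simp add: field_simps)
    moreover have "wt p j k / real k = (real ((j - 1) choose (k - 1)) / real k) * (p ^ k * (1 - p) ^ (j - k))"
      unfolding wt_def by simp
    ultimately show "wt p j k / real k = real (j choose k) * p ^ k * (1 - p) ^ (j - k) / real j"
      by simp
  qed simp
  also have "\<dots> \<le> (\<Sum>k\<in>{..j}. real (j choose k) * p ^ k * (1 - p) ^ (j - k) / real j)"
    by (rule sum_mono2) (use assms in auto)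
  also have "\<dots> = (p + (1 - p)) ^ j / real j"
    by (simp only: binomial_ring[of p "1-p" j] sum_divide_distrib)
  finally show ?thesis by simp
qed

lemma powr_tangent:
  fixes x y q :: real
  assumes "0 < x" "0 < y" "0 < q"
  shows "y powr q \<ge> x powr q * (1 + q * (1 - x / y))"
proof -
  have "ln (y/x) \<ge> 1 - x/y"
    using ln_le_minus_one[of "x/y"] assms by (simp add: ln_div)
  then have "1 + q * (1 - x/y) \<le> 1 + q * ln (y/x)" using assms by (simp add: mult_left_mono)
  also have "\<dots> \<le> exp (q * ln (y/x))" by simp
  also have "\<dots> = (y/x) powr q" using assms by (simp add: powr_def)
  finally have "1 + q * (1 - x/y) \<le> (y/x) powr q" .
  then have "x powr q * (1 + q * (1 - x/y)) \<le> x powr q * (y/x) powr q"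
    by (simp add: mult_left_mono)
  also have "\<dots> = y powr q" using assms by (simp add: powr_divide)
  finally show ?thesis .
qed

lemma powr_tangent_strict:
  fixes x y q :: real
  assumes "0 < x" "0 < y" "0 < q" "x \<noteq> y"
  shows "y powr q > x powr q * (1 + q * (1 - x / y))"
proof -
  have "ln (y/x) > 1 - x/y"
  proof -
    have "ln (x/y) \<le> x/y - 1" using ln_le_minus_one[of "x/y"] assms by simp
    moreover have "ln (x/y) \<noteq> x/y - 1" using ln_eq_minus_one[of "x/y"] assms by auto
    ultimately show ?thesis using assms by (simp add: ln_div)
  qed
  then have "1 + q * (1 - x/y) < 1 + q * ln (y/x)" using assms by simp
  also have "\<dots> \<le> exp (q * ln (y/x))" by simp
  also have "\<dots> = (y/x) powr q" using assms by (simp add: powr_def)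
  finally have "1 + q * (1 - x/y) < (y/x) powr q" .
  then have "x powr q * (1 + q * (1 - x/y)) < x powr q * (y/x) powr q"
    using assms by simp
  also have "\<dots> = y powr q" using assms by (simp add: powr_divide)
  finally show ?thesis .
qed

lemma Qf_pos:
  assumes j: "j \<ge> 1" and p: "0 < p" "p \<le> 1" and q: "0 < q" and pq: "-1 + q + p powr q \<ge> 0"
  shows "(\<Sum>k\<in>{1..j+1}. Qbar p j k * real k powr q) > 0"
proof -
  define x where "x = p * real j"
  have x: "0 < x" using j p by (simp add: x_def)
  define X where "X = x powr q"
  define J where "J = real j powr q"
  define F where "F = real (j+1) powr q"
  have XJ: "X = p powr q * J" unfolding X_def J_def x_def using p by (simp add: powr_mult)
  have J0: "J > 0" using j by (simp add: J_def)
  have "(\<Sum>k\<in>{1..j}. wt p j k * (X * (1 + q * (1 - x / real k)))) \<le> (\<Sum>k\<in>{1..j}. wt p j k * real k powr q)"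
  proof (rule sum_mono)
    fix k assume "k \<in> {1..j}"
    then have "X * (1 + q * (1 - x / real k)) \<le> real k powr q"
      unfolding X_def using powr_tangent[of x "real k" q] x q by simp
    then show "wt p j k * (X * (1 + q * (1 - x / real k))) \<le> wt p j k * real k powr q"
      using wt_nonneg[of p j k] p by (simp add: mult_left_mono)
  qed
  moreover have "(\<Sum>k\<in>{1..j}. wt p j k * (X * (1 + q * (1 - x / real k)))) =
     X * (1 + q) * (\<Sum>k\<in>{1..j}. wt p j k) - X * q * x * (\<Sum>k\<in>{1..j}. wt p j k / real k)"
    by (simp add: sum_distrib_left sum_subtractf[symmetric] algebra_simps diff_divide_distrib)
  moreover have "X * q * x * (\<Sum>k\<in>{1..j}. wt p j k / real k) \<le> X * q * x * (1 / real j)"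
  proof (rule mult_left_mono)
    show "(\<Sum>k\<in>{1..j}. wt p j k / real k) \<le> 1 / real j" using wt_harm[of j p] j p by simp
    show "0 \<le> X * q * x" using x q by (simp add: X_def)
  qed
  moreover have "X * q * x * (1 / real j) = X * q * p" using j by (simp add: x_def)
  ultimately have low: "(\<Sum>k\<in>{1..j}. wt p j k * real k powr q) \<ge> X * p"
    using wt_sum[OF j, of p] by (simp add: algebra_simps)
  have "F > J * (1 + q * (1 - real j / real (j+1)))"
    unfolding F_def J_def using powr_tangent_strict[of "real j" "real (j+1)" q] j q by simp
  moreover have "1 - real j / real (j+1) = 1 / real (j+1)" by (simp add: field_simps)
  ultimately have "F > J * (1 + q * (1 / real (j+1)))" by simp
  then have "F > J + J * q / real (j+1)" by (simp add: algebra_simps)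
  then have "real (j+1) * F > real (j+1) * (J + J * q / real (j+1))"
    by (simp del: of_nat_Suc)
  moreover have "real (j+1) * (J + J * q / real (j+1)) = real (j+1) * J + q * J"
    by (simp add: field_simps del: of_nat_Suc)
  ultimately have up: "real (j+1) * F > real (j+1) * J + q * J"
    by (metis mult_strict_left_mono of_nat_0_less_iff zero_less_Suc add.commute Suc_eq_plus1)
  have E1: "(\<Sum>k\<in>{1..j+1}. Qbar p j k * real k powr q) =
    (\<Sum>k\<in>{1..j}. wt p j k * real k powr q) - (2 + real j) * p * J + p * (real (j+1) * F)"
    unfolding J_def F_def using Qbar_sum[OF j, of p "\<lambda>k. real k powr q"] by (simp add: algebra_simps)
  have E2: "(\<Sum>k\<in>{1..j}. wt p j k * real k powr q) - (2 + real j) * p * J + p * (real (j+1) * F) > X * p - (2 + real j) * p * J + p * (real (j+1) * J + q * J)"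
    using low up p by (smt (verit) mult_strict_left_mono)
  have E3: "X * p - (2 + real j) * p * J + p * (real (j+1) * J + q * J) = p * J * (-1 + q + p powr q)"
    unfolding XJ by (simp add: algebra_simps)
  have E4: "p * J * (-1 + q + p powr q) \<ge> 0" using p J0 pq by simp
  show ?thesis using E1 E2 E3 E4 by linarith
qed

lemma has_sum_finsum:
  fixes f :: "'i \<Rightarrow> 'a \<Rightarrow> real"
  assumes "finite I" "\<And>i. i \<in> I \<Longrightarrow> (f i has_sum s i) A"
  shows "((\<lambda>x. \<Sum>i\<in>I. f i x) has_sum (\<Sum>i\<in>I. s i)) A"
  using assms
proof (induction I rule: finite_induct)
  case empty then show ?case by simp
next
  case (insert i I)
  then show ?case by (simp add: has_sum_add)
qed

lemma Qbar_rowsum: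
  assumes "j \<ge> 1"
  shows "(\<Sum>k\<in>{1..j+1}. Qbar p j k) = 0"
  using Qbar_sum[OF assms, of p "\<lambda>_. 1"] wt_sum[OF assms, of p] by (simp add: algebra_simps)

theorem proposition9:
  fixes p q :: real and \<pi> :: "nat \<Rightarrow> real"
  assumes "0 < p" and "p \<le> 1"
    and "0 < q" and "-1 + q + p powr q \<ge> 0"
    and "stationary_dist (Qbar p) \<pi>"
  shows "\<not> ((\<lambda>k. real k powr q * \<pi> k) summable_on {1..})"
proof
  assume summ: "(\<lambda>k. real k powr q * \<pi> k) summable_on {1..}"
  note p = assms(1,2) and q = assms(3) and pq = assms(4)
  have pinonneg: "\<And>k. k \<ge> 1 \<Longrightarrow> \<pi> k \<ge> 0"
    and pisum: "(\<pi> has_sum 1) {1..}"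
    and stat: "\<And>k. k \<ge> 1 \<Longrightarrow> ((\<lambda>j. \<pi> j * Qbar p j k) has_sum 0) {1..}"
    using assms(5) unfolding stationary_dist_def by auto
  define f where "f k = real k powr q" for k :: nat
  define Qf where "Qf j = (\<Sum>k\<in>{1..j+1}. Qbar p j k * f k)" for j
  have Qf_pos: "\<And>j. j \<ge> 1 \<Longrightarrow> Qf j > 0"
    unfolding Qf_def f_def using Qf_pos p q pq by blast
  have f_nonneg: "\<And>k. f k \<ge> 0" by (simp add: f_def)
  have f_mono: "\<And>a b. a \<le> b \<Longrightarrow> f a \<le> f b"
    unfolding f_def using q by (simp add: powr_mono2)
  obtain j0 where j0: "j0 \<ge> 1" "\<pi> j0 > 0"
  proof -
    have "\<exists>j\<ge>1. \<pi> j \<noteq> 0"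
    proof (rule ccontr)
      assume "\<not> ?thesis"
      then have "(\<pi> has_sum 0) {1..}" by (intro has_sum_0) auto
      with pisum show False using has_sum_unique by fastforce
    qed
    then obtain j where "j \<ge> 1" "\<pi> j \<noteq> 0" by blast
    with pinonneg[of j] show ?thesis using that by fastforce
  qed
  define c where "c = \<pi> j0 * Qf j0"
  have c: "c > 0" unfolding c_def using j0 Qf_pos by simp
  define G where "G k = real k powr q * \<pi> k" for k
  have G0: "G 0 = 0" by (simp add: G_def)
  have Gnonneg: "\<And>k. G k \<ge> 0" unfolding G_def using pinonneg by (case_tac "k = 0") auto
  have sumG: "summable G"
  proof -
    obtain S where "(G has_sum S) {1..}" using summ unfolding G_def summable_on_def by blast
    then have "(G has_sum S) UNIV"
      by (subst (asm) has_sum_cong_neutral[where T = UNIV and g = G]) (auto simp: G0 not_less_eq_eq)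
    then show ?thesis using has_sum_imp_sums sums_summable by blast
  qed
  obtain N0 where N0: "\<And>n. n \<ge> N0 \<Longrightarrow> norm (\<Sum>i. G (i + n)) < c / p"
    using suminf_exist_split[OF _ sumG, of "c / p"] c p by auto
  define N where "N = max N0 (j0 + 1)"
  have N: "N \<ge> N0" "N > j0" "N \<ge> 1" using j0 by (auto simp: N_def)
  define t where "t = (\<Sum>i. G (i + N))"
  have tsum: "(\<lambda>i. G (i + N)) sums t"
    unfolding t_def using sumG by (simp add: summable_ignore_initial_segment summable_sums)
  have t_small: "p * t < c"
  proof -
    have "t \<ge> 0" unfolding t_def using Gnonneg sumG by (simp add: suminf_nonneg summable_ignore_initial_segment)
    then have "t < c / p" using N0[OF N(1)] by (simp add: t_def)
    then show ?thesis using p by (simp add: field_simps)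
  qed
  define g where "g k = (if k \<le> N then f k - f N else 0)" for k
  define QG where "QG j = (\<Sum>k\<in>{1..j+1}. Qbar p j k * g k)" for j
  have hsQG: "((\<lambda>j. \<pi> j * QG j) has_sum 0) {1..}"
  proof -
    have "((\<lambda>j. \<Sum>k\<in>{1..N}. \<pi> j * Qbar p j k * g k) has_sum (\<Sum>k\<in>{1..N}. 0 * g k)) {1..}"
    proof (rule has_sum_finsum)
      fix k assume "k \<in> {1..N}"
      then show "((\<lambda>j. \<pi> j * Qbar p j k * g k) has_sum 0 * g k) {1..}"
        using has_sum_cmult_left[OF stat[of k], of "g k"] by simp
    qed simp
    then have h: "((\<lambda>j. \<Sum>k\<in>{1..N}. \<pi> j * Qbar p j k * g k) has_sum 0) {1..}" by simp
    show ?thesis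
    proof (subst has_sum_cong)
      show "((\<lambda>j. \<Sum>k\<in>{1..N}. \<pi> j * Qbar p j k * g k) has_sum 0) {1..}" by (rule h)
    next
      fix j :: nat assume "j \<in> {1..}"
      have "(\<Sum>k\<in>{1..N}. \<pi> j * Qbar p j k * g k) = (\<Sum>k\<in>{1..N+j+1}. \<pi> j * Qbar p j k * g k)"
        by (rule sum.mono_neutral_left) (auto simp: g_def)
      also have "\<dots> = (\<Sum>k\<in>{1..j+1}. \<pi> j * Qbar p j k * g k)"
        by (rule sum.mono_neutral_right) (auto simp: Qbar_above)
      also have "\<dots> = \<pi> j * QG j" unfolding QG_def sum_distrib_left by (simp only: mult.assoc)
      finally show "\<pi> j * QG j = (\<Sum>k\<in>{1..N}. \<pi> j * Qbar p j k * g k)" by simp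
    qed
  qed
  have QG_low: "QG j = Qf j" if "j \<ge> 1" "j < N" for j
  proof -
    have "QG j = (\<Sum>k\<in>{1..j+1}. Qbar p j k * f k - f N * Qbar p j k)"
      unfolding QG_def by (rule sum.cong) (use that in \<open>auto simp: g_def algebra_simps\<close>)
    also have "\<dots> = Qf j - f N * (\<Sum>k\<in>{1..j+1}. Qbar p j k)"
      unfolding Qf_def sum_subtractf sum_distrib_left by (rule refl)
    also have "\<dots> = Qf j" using Qbar_rowsum[OF that(1)] by simp
    finally show ?thesis .
  qed
  have QG_high: "QG j \<ge> - p * f j" if "j \<ge> N" for j
  proof -
    have j1: "j \<ge> 1" using that N by simp
    have e0: "QG j = (\<Sum>k\<in>{1..j}. wt p j k * g k) - (2 + real j) * p * g j + real (j+1) * p * g (j+1)"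
      unfolding QG_def by (rule Qbar_sum[OF j1])
    have "g j = 0" "g (j+1) = 0" using that by (auto simp: g_def)
    with e0 have e: "QG j = (\<Sum>k\<in>{1..j}. wt p j k * g k)" by simp
    have "(\<Sum>k\<in>{1..j}. wt p j k * (- f N)) \<le> (\<Sum>k\<in>{1..j}. wt p j k * g k)"
    proof (rule sum_mono)
      fix k assume "k \<in> {1..j}"
      have "- f N \<le> g k" using f_nonneg[of k] f_nonneg[of N] by (auto simp: g_def)
      then show "wt p j k * (- f N) \<le> wt p j k * g k"
        using wt_nonneg[of p j k] p by (rule_tac mult_left_mono) auto
    qed
    moreover have "(\<Sum>k\<in>{1..j}. wt p j k * (- f N)) = - p * f N"
      using wt_sum[OF j1, of p] by (simp add: sum_negf sum_distrib_right[symmetric])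
    moreover have "p * f N \<le> p * f j" using f_mono[OF that] p by simp
    ultimately show ?thesis using e by linarith
  qed
  define T where "T j = (if j = 0 then 0 else \<pi> j * QG j)" for j
  have Tsum: "T sums 0"
  proof -
    have "(T has_sum 0) UNIV"
      using hsQG by (subst (asm) has_sum_cong_neutral[where T = UNIV and g = T]) (auto simp: T_def not_less_eq_eq)
    then show ?thesis by (rule has_sum_imp_sums)
  qed
  define A where "A j = (if j \<in> {1..<N} then \<pi> j * Qf j else 0)" for j
  define B where "B j = (if j < N then 0 else - p * G j)" for j
  have Asum: "A sums (\<Sum>j\<in>{1..<N}. A j)" by (rule sums_finite) (auto simp: A_def)
  have Bsum: "B sums (- p * t)"
  proof -
    have "(\<lambda>i. B (i + N)) sums (- p * t)" unfolding B_def using sums_mult[OF tsum, of "-p"] by simp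
    then show ?thesis by (subst (asm) sums_zero_iff_shift) (auto simp: B_def)
  qed
  have "(\<Sum>j\<in>{1..<N}. A j) + (- p * t) \<le> 0"
  proof (rule sums_le[OF _ sums_add[OF Asum Bsum] Tsum])
    fix j
    show "A j + B j \<le> T j"
    proof (cases "j = 0")
      case True then show ?thesis using N by (simp add: A_def B_def T_def)
    next
      case False
      show ?thesis
      proof (cases "j < N")
        case True then show ?thesis using False QG_low[of j] by (simp add: A_def B_def T_def)
      next
        case nl: False
        have "\<pi> j * (- p * f j) \<le> \<pi> j * QG j"
          using QG_high[of j] nl pinonneg[of j] False by (intro mult_left_mono) auto
        then show ?thesis using False nl by (simp add: A_def B_def T_def G_def f_def algebra_simps)
      qed
    qed
  qed
  moreover have "c \<le> (\<Sum>j\<in>{1..<N}. A j)"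
  proof -
    have "A j0 \<le> (\<Sum>j\<in>{1..<N}. A j)"
    proof (rule member_le_sum)
      show "j0 \<in> {1..<N}" using j0 N by simp
      fix x assume "x \<in> {1..<N} - {j0}"
      then show "0 \<le> A x" using pinonneg[of x] Qf_pos[of x] by (simp add: A_def)
    qed simp
    then show ?thesis using j0 N by (simp add: A_def c_def)
  qed
  ultimately show False using t_small by linarith
qed

end
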